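(* Under the standing assumptions, let $t$ be a task of type 2 with intermediate task $i$ with respect to a demand vector $\vec v$, and suppose $\vec v$ has at least one unit of demand in each of two tasks $s_1,s_2$, both distinct from $t$ and $i$. Let $\vec v'$ be the demand vector such that $(\vec v,\vec v')$ is $(i,t)$-adjacent. Then $(\vec v,\vec v')$ has switching cost $1$.
   Context: Standing assumptions: $n\ge 4$, $k\ge 5$, and $f_1,\dots,f_n$ are functions from demand vectors to $[k]$ satisfying the demand (for every demand vector $\vec v$ and task $j$, exactly $v_j$ agents $a$ have $f_a(\vec v)=j$), with maximum switching cost at most $2$. A demand vector is $\vec v=(v_1,\dots,v_k)$ of non-negative integers with $\sum v_j=n$; task $j$ is non-empty in $\vec v$ if $v_j\ge1$. The switching cost of $(\vec v,\vec v')$ is the number of agents $a$ with $f_a(\vec v)\ne f_a(\vec v')$; $\vec v,\vec v'$ are adjacent if $\|\vec v-\vec v'\|_1=2$. An ordered pair $(\vec v_1,\vec v_2)$ is $(s,t)$-adjacent if $s\ne t$ and $\vec v_2$ is obtained from $\vec v_1$ by moving one unit of demand from task $s$ to task $t$. Agent $a$ is $(i,j)$-mobile with respect to $(\vec v_1,\vec v_2)$ if $f_a(\vec v_1)=i$, $f_a(\vec v_2)=j$, $i\ne j$. If $(\vec v_1,\vec v_2)$ is $(s,t)$-adjacent with switching cost $2$, then there is a task $i\notin\{s,t\}$ such that one switching agent is $(s,i)$-mobile and the other is $(i,t)$-mobile; $i$ is called the intermediate task of $(\vec v_1,\vec v_2)$. A task $t$ is of type 1 with respect to $\vec v$ if for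 every task $s\ne t$ non-empty in $\vec v$, the $(s,t)$-adjacent pair starting at $\vec v$ has switching cost $1$. A task $t$ is of type 2 with respect to $\vec v$ if there exist a task $i$ and an agent $a$ such that for every task $s\notin\{i,t\}$ non-empty in $\vec v$, the $(s,t)$-adjacent pair starting at $\vec v$ has switching cost $2$, intermediate task $i$, and $(i,t)$-mobile agent $a$; then $i$ is the intermediate task of $t$ with respect to $\vec v$. *)

theory Defs
  imports Main
begin

(* Agents are 1..n, tasks are 1..k.  A demand vector is a function nat => nat
   that vanishes outside the task set {1..k} and sums to n. *)

definition demand_vec :: "nat \<Rightarrow> nat \<Rightarrow> (nat \<Rightarrow> nat) \<Rightarrow> bool" where
  "demand_vec n k v \<longleftrightarrow> (\<forall>j. j \<notin> {1..k} \<longrightarrow> v j = 0) \<and> (\<Sum>j\<in>{1..k}. v j) = n"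

(* f a v is the task assigned to agent a under demand vector v *)
definition satisfies_demand ::
  "nat \<Rightarrow> nat \<Rightarrow> (nat \<Rightarrow> (nat \<Rightarrow> nat) \<Rightarrow> nat) \<Rightarrow> bool" where
  "satisfies_demand n k f \<longleftrightarrow>
     (\<forall>v. demand_vec n k v \<longrightarrow>
        (\<forall>a\<in>{1..n}. f a v \<in> {1..k}) \<and>
        (\<forall>j\<in>{1..k}. card {a\<in>{1..n}. f a v = j} = v j))"

definition switching_cost ::
  "nat \<Rightarrow> (nat \<Rightarrow> (nat \<Rightarrow> nat) \<Rightarrow> nat) \<Rightarrow> (nat \<Rightarrow> nat) \<Rightarrow> (nat \<Rightarrow> nat) \<Rightarrow> nat" where
  "switching_cost n f v v' = card {a\<in>{1..n}. f a v \<noteq> f a v'}"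

definition adjacent :: "nat \<Rightarrow> (nat \<Rightarrow> nat) \<Rightarrow> (nat \<Rightarrow> nat) \<Rightarrow> bool" where
  "adjacent k v v' \<longleftrightarrow> (\<Sum>j\<in>{1..k}. \<bar>int (v j) - int (v' j)\<bar>) = 2"

definition max_switching_cost_le ::
  "nat \<Rightarrow> nat \<Rightarrow> (nat \<Rightarrow> (nat \<Rightarrow> nat) \<Rightarrow> nat) \<Rightarrow> nat \<Rightarrow> bool" where
  "max_switching_cost_le n k f c \<longleftrightarrow>
     (\<forall>v v'. demand_vec n k v \<and> demand_vec n k v' \<and> adjacent k v v' \<longrightarrow>
        switching_cost n f v v' \<le> c)"

definition move :: "nat \<Rightarrow> nat \<Rightarrow> (nat \<Rightarrow> nat) \<Rightarrow> (nat \<Rightarrow> nat)" where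
  "move s t v = v(s := v s - 1, t := v t + 1)"

definition st_adjacent :: "nat \<Rightarrow> nat \<Rightarrow> (nat \<Rightarrow> nat) \<Rightarrow> (nat \<Rightarrow> nat) \<Rightarrow> bool" where
  "st_adjacent s t v1 v2 \<longleftrightarrow> s \<noteq> t \<and> v1 s \<ge> 1 \<and> v2 = move s t v1"

definition mobile ::
  "(nat \<Rightarrow> (nat \<Rightarrow> nat) \<Rightarrow> nat) \<Rightarrow> nat \<Rightarrow> nat \<Rightarrow> nat \<Rightarrow> (nat \<Rightarrow> nat) \<Rightarrow> (nat \<Rightarrow> nat) \<Rightarrow> bool" where
  "mobile f a i j v1 v2 \<longleftrightarrow> f a v1 = i \<and> f a v2 = j \<and> i \<noteq> j"

definition intermediate_task ::
  "nat \<Rightarrow> (nat \<Rightarrow> (nat \<Rightarrow> nat) \<Rightarrow> nat) \<Rightarrow> nat \<Rightarrow> nat \<Rightarrow> nat \<Rightarrow> (nat \<Rightarrow> nat) \<Rightarrow> (nat \<Rightarrow> nat) \<Rightarrow> bool" where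
  "intermediate_task n f s t i v1 v2 \<longleftrightarrow> i \<notin> {s, t} \<and>
     (\<exists>a\<in>{1..n}. \<exists>b\<in>{1..n}. a \<noteq> b \<and> mobile f a s i v1 v2 \<and> mobile f b i t v1 v2)"

definition type2_with ::
  "nat \<Rightarrow> nat \<Rightarrow> (nat \<Rightarrow> (nat \<Rightarrow> nat) \<Rightarrow> nat) \<Rightarrow> nat \<Rightarrow> nat \<Rightarrow> (nat \<Rightarrow> nat) \<Rightarrow> bool" where
  "type2_with n k f t i v \<longleftrightarrow> (\<exists>a\<in>{1..n}. \<forall>s\<in>{1..k}. s \<notin> {i, t} \<and> v s \<ge> 1 \<longrightarrow>
      switching_cost n f v (move s t v) = 2 \<and>
      intermediate_task n f s t i v (move s t v) \<and>
      mobile f a i t v (move s t v))"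

end

theory Submission imports Defs begin

lemma card4_ge3:
  assumes "a\<noteq>b" "c\<noteq>d" "a\<noteq>c" "b\<noteq>d" "\<not>(a=d \<and> b=c)"
  shows "card {a,b,c,d::nat} \<ge> 3"
  using assms by (cases "a=d"; cases "b=c"; auto simp: card_insert_if)

lemma move_demand:
  assumes "demand_vec n k v" "s\<in>{1..k}" "t\<in>{1..k}" "s\<noteq>t" "v s \<ge> 1"
  shows "demand_vec n k (move s t v)"
proof -
  have out: "\<forall>j. j \<notin> {1..k} \<longrightarrow> move s t v j = 0"
    using assms by (auto simp: demand_vec_def move_def)
  have "(\<Sum>j\<in>{1..k}. int (move s t v j)) = (\<Sum>j\<in>{1..k}. int (v j) + (if j = t then 1 else 0) - (if j = s then 1 else 0))"
    using assms by (intro sum.cong) (auto simp: move_def)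
  also have "\<dots> = (\<Sum>j\<in>{1..k}. int (v j))"
    using assms by (simp add: sum.distrib sum_subtractf)
  finally have "int (\<Sum>j\<in>{1..k}. move s t v j) = int n"
    using assms(1) unfolding demand_vec_def by (metis of_nat_sum)
  then have "(\<Sum>j\<in>{1..k}. move s t v j) = n" by (simp only: of_nat_eq_iff)
  then show ?thesis using out by (simp add: demand_vec_def)
qed

lemma adj_two:
  assumes "p\<in>{1..k}" "q\<in>{1..k}" "p\<noteq>q"
    and "\<And>j. \<bar>int (x j) - int (y j)\<bar> = (if j = p then 1 else 0) + (if j = q then 1 else 0)"
  shows "adjacent k x y"
  using assms by (simp add: adjacent_def sum.distrib)

lemma count_diff:
  assumes "satisfies_demand n k f" "demand_vec n k x" "demand_vec n k y" "j\<in>{1..k}"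
  shows "int (x j) - int (y j) = int (card {a\<in>{a\<in>{1..n}. f a x \<noteq> f a y}. f a x = j}) - int (card {a\<in>{a\<in>{1..n}. f a x \<noteq> f a y}. f a y = j})"
proof -
  let ?D = "{a\<in>{1..n}. f a x \<noteq> f a y}"
  have A: "{a\<in>{1..n}. f a x = j} = {a\<in>?D. f a x = j} \<union> {a\<in>{1..n}. f a x = j \<and> f a x = f a y}" by auto
  have B: "{a\<in>{1..n}. f a y = j} = {a\<in>?D. f a y = j} \<union> {a\<in>{1..n}. f a x = j \<and> f a x = f a y}" by auto
  have cx: "card {a\<in>{1..n}. f a x = j} = card {a\<in>?D. f a x = j} + card {a\<in>{1..n}. f a x = j \<and> f a x = f a y}"
    unfolding A by (rule card_Un_disjoint) auto
  have cy: "card {a\<in>{1..n}. f a y = j} = card {a\<in>?D. f a y = j} + card {a\<in>{1..n}. f a x = j \<and> f a x = f a y}"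
    unfolding B by (rule card_Un_disjoint) auto
  have "x j = card {a\<in>{1..n}. f a x = j}" "y j = card {a\<in>{1..n}. f a y = j}"
    using assms unfolding satisfies_demand_def by auto
  then show ?thesis using cx cy by simp
qed

lemma card_pair_filter:
  assumes "c \<noteq> d"
  shows "card {a\<in>{c,d}. P a} = (if P c then 1 else 0) + (if P d then 1 else (0::nat))"
proof -
  have "{a\<in>{c,d}. P a} = (if P c then {c} else {}) \<union> (if P d then {d} else {})" by auto
  then show ?thesis using assms by (auto simp: card_insert_if)
qed

lemma struct4:
  fixes p q r s i t :: nat
  assumes "p\<in>{1..k}" "q\<in>{1..k}" "r\<in>{1..k}" "s\<in>{1..k}" "i\<in>{1..k}" "t\<in>{1..k}"
    "p\<noteq>q" "r\<noteq>s" "i\<noteq>t"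
    and h: "\<forall>j\<in>{1..k}. (if j = i then 1 else 0) - (if j = t then 1 else 0) =
       (if p = j then 1 else 0) + (if r = j then 1 else 0) - (if q = j then 1 else 0) - (if s = j then (1::int) else 0)"
  shows "(q = t \<and> r = i \<and> s = p \<and> p\<notin>{i,t}) \<or> (s = t \<and> p = i \<and> q = r \<and> r \<notin>{i,t})"
proof -
  have "\<And>j. j \<in> {p,q,r,s,i,t} \<Longrightarrow> (if j = i then 1 else 0) - (if j = t then 1 else 0) =
       (if p = j then 1 else 0) + (if r = j then 1 else 0) - (if q = j then 1 else 0) - (if s = j then (1::int) else 0)"
  proof -
    fix j assume "j \<in> {p,q,r,s,i,t}"
    then have "j \<in> {1..k}" using assms(1-6) by auto
    then show "?thesis j" by (rule bspec[OF h])
  qed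
  note e = this
  have et: "(q = t \<or> s = t)" using e[of t] assms(9) by (auto split: if_splits)
  show ?thesis
  proof (cases "q = t")
    case True
    then have "s \<noteq> t" using e[of t] assms by (auto split: if_splits)
    have "p \<noteq> t" using True assms by auto
    show ?thesis using e[of p] e[of r] e[of s] e[of i] \<open>s\<noteq>t\<close> \<open>p\<noteq>t\<close> True assms(7-9) by (auto split: if_splits)
  next
    case False
    then have "s = t" using et by simp
    then have "r \<noteq> t" "q \<noteq> t" using e[of t] assms False by (auto split: if_splits)
    then show ?thesis using e[of p] e[of r] e[of q] e[of i] \<open>s=t\<close> False assms(7-9) by (auto split: if_splits)
  qed
qed

lemma side:
  assumes "switching_cost n f v w = 2" "intermediate_task n f s t i v w" "mobile f a i t v w"
    "a\<in>{1..n}" "s \<notin> {i,t}"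
  shows "\<exists>b\<in>{1..n}. b\<noteq>a \<and> f b v = s \<and> f b w = i \<and> (\<forall>z\<in>{1..n}. z\<notin>{a,b} \<longrightarrow> f z w = f z v)"
proof -
  obtain x where x: "x\<in>{1..n}" "mobile f x s i v w"
    using assms(2) unfolding intermediate_task_def by blast
  have xa: "x \<noteq> a" using x assms(3,5) by (auto simp: mobile_def)
  let ?D = "{z\<in>{1..n}. f z v \<noteq> f z w}"
  have sub: "{a,x} \<subseteq> ?D" using x assms(3,4) by (auto simp: mobile_def)
  have "card ?D = 2" using assms(1) by (simp add: switching_cost_def)
  moreover have "card {a,x} = 2" using xa by simp
  ultimately have "{a,x} = ?D" using sub by (intro card_subset_eq) auto
  have "\<forall>z\<in>{1..n}. z\<notin>{a,x} \<longrightarrow> f z w = f z v"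
  proof (intro ballI impI)
    fix z assume "z\<in>{1..n}" "z\<notin>{a,x}"
    then have "z \<notin> ?D" using \<open>{a,x} = ?D\<close> by blast
    then show "f z w = f z v" using \<open>z\<in>{1..n}\<close> by auto
  qed
  then show ?thesis using x xa by (auto simp: mobile_def)
qed

lemma key:
  fixes f :: "nat \<Rightarrow> (nat \<Rightarrow> nat) \<Rightarrow> nat"
  assumes "a\<noteq>b" "f a v = i" "f a w = t" "f b v = s" "f b w = i"
    "\<forall>z\<in>{1..n}. z\<notin>{a,b} \<longrightarrow> f z w = f z v"
    "c\<noteq>d" "f c v = j" "f c v' = t" "f d v = i" "f d v' = j"
    "\<forall>z\<in>{1..n}. z\<notin>{c,d} \<longrightarrow> f z v' = f z v"
    "j\<notin>{i,t}" "s\<notin>{i,t}" "i\<noteq>t" "a\<in>{1..n}" "b\<in>{1..n}" "c\<in>{1..n}" "d\<in>{1..n}"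
    "card {z\<in>{1..n}. f z w \<noteq> f z v'} \<le> 2"
  shows "j = s"
proof (rule ccontr)
  assume js: "j \<noteq> s"
  have sub: "{a,b,c,d} \<subseteq> {z\<in>{1..n}. f z w \<noteq> f z v'}"
  proof -
    have "a \<in> {z\<in>{1..n}. f z w \<noteq> f z v'}"
    proof (cases "a = d")
      case True then show ?thesis using assms(1-5,7-11,13-19) by auto
    next
      case False
      have "a \<noteq> c" using assms(1-5,7-11,13-19) by auto
      then have "f a v' = i" using False assms(2,12,16) by auto
      then show ?thesis using assms(1-5,7-11,13-19) by auto
    qed
    moreover have "b \<in> {z\<in>{1..n}. f z w \<noteq> f z v'}"
    proof (cases "b = c")
      case True then show ?thesis using assms(1-5,7-11,13-19) by auto
    next
      case False
      have "b \<noteq> d" using assms(1-5,7-11,13-19) by auto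
      then have "f b v' = s" using False assms(4,12,17) by auto
      then show ?thesis using assms(1-5,7-11,13-19) by auto
    qed
    moreover have "c \<in> {z\<in>{1..n}. f z w \<noteq> f z v'}"
    proof (cases "c = b")
      case True then show ?thesis using assms(1-5,7-11,13-19) by auto
    next
      case False
      have "c \<noteq> a" using assms(1-5,7-11,13-19) by auto
      then have "f c w = j" using False assms(8,6,18) by auto
      then show ?thesis using assms(1-5,7-11,13-19) by auto
    qed
    moreover have "d \<in> {z\<in>{1..n}. f z w \<noteq> f z v'}"
    proof (cases "d = a")
      case True then show ?thesis using assms(1-5,7-11,13-19) by auto
    next
      case False
      have "d \<noteq> b" using assms(1-5,7-11,13-19) by auto
      then have "f d w = i" using False assms(10,6,19) by auto
      then show ?thesis using assms(1-5,7-11,13-19) by auto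
    qed
    ultimately show ?thesis by blast
  qed
  have nd: "\<not>(a=d \<and> b=c)" using assms(4,8) js by auto
  have "card {a,b,c,d} \<ge> 3"
    apply (rule card4_ge3) using assms(1-5,7-11,13-15) nd by auto
  moreover have "card {a,b,c,d} \<le> card {z\<in>{1..n}. f z w \<noteq> f z v'}"
    using sub by (intro card_mono) auto
  ultimately show False using assms(20) by linarith
qed

theorem lemma4p3:
  fixes n k :: nat and f :: "nat \<Rightarrow> (nat \<Rightarrow> nat) \<Rightarrow> nat"
    and v :: "nat \<Rightarrow> nat" and t i s1 s2 :: nat
  assumes "n \<ge> 4" and "k \<ge> 5"
    and "satisfies_demand n k f"
    and "max_switching_cost_le n k f 2"
    and "demand_vec n k v"
    and "t \<in> {1..k}" and "i \<in> {1..k}"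
    and "type2_with n k f t i v"
    and "s1 \<in> {1..k}" and "s2 \<in> {1..k}" and "s1 \<noteq> s2"
    and "s1 \<notin> {t, i}" and "s2 \<notin> {t, i}"
    and "v s1 \<ge> 1" and "v s2 \<ge> 1"
    and "st_adjacent i t v v'"
  shows "switching_cost n f v v' = 1"
proof -
  note sd = assms(3) and mx = assms(4) and dv = assms(5)
  have it: "i \<noteq> t" and vi: "v i \<ge> 1" and v'def: "v' = move i t v"
    using assms(16) by (auto simp: st_adjacent_def)
  obtain a where a: "a\<in>{1..n}" and P: "\<forall>s\<in>{1..k}. s \<notin> {i, t} \<and> v s \<ge> 1 \<longrightarrow>
      switching_cost n f v (move s t v) = 2 \<and>
      intermediate_task n f s t i v (move s t v) \<and>
      mobile f a i t v (move s t v)"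
    using assms(8) unfolding type2_with_def by blast
  have dv': "demand_vec n k v'" unfolding v'def using move_demand[OF dv assms(7,6) it vi] .
  have adjv: "adjacent k v v'"
    by (rule adj_two[of i k t]) (use assms(6,7) it vi in \<open>auto simp: v'def move_def\<close>)
  let ?D = "{z\<in>{1..n}. f z v \<noteq> f z v'}"
  have cD: "switching_cost n f v v' = card ?D" by (simp add: switching_cost_def)
  have le2: "card ?D \<le> 2" using mx dv dv' adjv cD unfolding max_switching_cost_le_def by metis
  have vt: "v' t = v t + 1" using it by (simp add: v'def move_def)
  have cnt: "int (v j) - int (v' j) = int (card {z\<in>?D. f z v = j}) - int (card {z\<in>?D. f z v' = j})"
    if "j\<in>{1..k}" for j
    using count_diff[OF sd dv dv' that] .
  have ne0: "card ?D \<noteq> 0"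
  proof
    assume c0: "card ?D = 0"
    have m1: "card {z\<in>?D. f z v = t} \<le> card ?D" and m2: "card {z\<in>?D. f z v' = t} \<le> card ?D"
      by (rule card_mono; auto)+
    have z1: "card {z\<in>?D. f z v = t} = 0" using m1 c0 by linarith
    have z2: "card {z\<in>?D. f z v' = t} = 0" using m2 c0 by linarith
    have "int (v t) - int (v' t) = 0" using cnt[OF assms(6)] unfolding z1 z2 by simp
    then show False using vt by simp
  qed
  have side_s: "\<exists>b\<in>{1..n}. b\<noteq>a \<and> f b v = s \<and> f b (move s t v) = i \<and> (\<forall>z\<in>{1..n}. z\<notin>{a,b} \<longrightarrow> f z (move s t v) = f z v)
      \<and> f a (move s t v) = t \<and> f a v = i \<and> card {z\<in>{1..n}. f z (move s t v) \<noteq> f z v'} \<le> 2"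
    if s: "s\<in>{1..k}" "s\<notin>{t,i}" "v s \<ge> 1" for s
  proof -
    have Ps: "switching_cost n f v (move s t v) = 2" "intermediate_task n f s t i v (move s t v)"
      "mobile f a i t v (move s t v)" using P s by auto
    have dw: "demand_vec n k (move s t v)" using move_demand[OF dv s(1) assms(6)] s by auto
    have adjw: "adjacent k (move s t v) v'"
      by (rule adj_two[of s k i]) (use assms(6,7) it vi s in \<open>auto simp: v'def move_def\<close>)
    have "card {z\<in>{1..n}. f z (move s t v) \<noteq> f z v'} \<le> 2"
      using mx dw dv' adjw by (auto simp: max_switching_cost_le_def switching_cost_def)
    moreover from side[OF Ps a] s obtain b where "b\<in>{1..n}" "b\<noteq>a" "f b v = s" "f b (move s t v) = i"
      "\<forall>z\<in>{1..n}. z\<notin>{a,b} \<longrightarrow> f z (move s t v) = f z v" by auto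
    ultimately show ?thesis using Ps(3) by (auto simp: mobile_def)
  qed
  have ne2: "card ?D \<noteq> 2"
  proof
    assume "card ?D = 2"
    then obtain c d where cd: "?D = {c,d}" "c \<noteq> d" by (auto simp: card_2_iff)
    have cD': "c \<in> ?D" "d \<in> ?D" unfolding cd(1) by simp_all
    then have cdin: "c\<in>{1..n}" "d\<in>{1..n}" "f c v \<noteq> f c v'" "f d v \<noteq> f d v'" by simp_all
    have outcd: "\<forall>z\<in>{1..n}. z\<notin>{c,d} \<longrightarrow> f z v' = f z v"
    proof (intro ballI impI)
      fix z assume z: "z\<in>{1..n}" "z\<notin>{c,d}"
      then have "z \<notin> ?D" unfolding cd(1) by simp
      then show "f z v' = f z v" using z(1) by simp
    qed
    have rng: "f c v \<in> {1..k}" "f c v' \<in> {1..k}" "f d v \<in> {1..k}" "f d v' \<in> {1..k}"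
      using sd dv dv' cdin unfolding satisfies_demand_def by auto
    have h: "\<forall>j\<in>{1..k}. (if j = i then 1 else 0) - (if j = t then 1 else 0) =
       (if f c v = j then 1 else 0) + (if f d v = j then 1 else 0) - (if f c v' = j then 1 else 0) - (if f d v' = j then (1::int) else 0)"
    proof
      fix j assume j: "j\<in>{1..k}"
      have "int (v j) - int (v' j) = (if j = i then 1 else 0) - (if j = t then 1 else 0)"
        using it vi by (auto simp: v'def move_def)
      moreover have "int (v j) - int (v' j) = (if f c v = j then 1 else 0) + (if f d v = j then 1 else 0) - (if f c v' = j then 1 else 0) - (if f d v' = j then (1::int) else 0)"
        using cnt[OF j] unfolding cd(1) card_pair_filter[OF cd(2)] by simp
      ultimately show "(if j = i then 1 else 0) - (if j = t then 1 else 0) =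
       (if f c v = j then 1 else 0) + (if f d v = j then 1 else 0) - (if f c v' = j then 1 else 0) - (if f d v' = j then (1::int) else 0)"
        by simp
    qed
    have "\<exists>c' d' j. c'\<noteq>d' \<and> f c' v = j \<and> f c' v' = t \<and> f d' v = i \<and> f d' v' = j \<and> j\<notin>{i,t}
       \<and> c'\<in>{1..n} \<and> d'\<in>{1..n} \<and> (\<forall>z\<in>{1..n}. z\<notin>{c',d'} \<longrightarrow> f z v' = f z v)"
      using struct4[OF rng(1) rng(2) rng(3) rng(4) assms(7) assms(6) cdin(3) cdin(4) it h]
    proof
      assume H: "f c v' = t \<and> f d v = i \<and> f d v' = f c v \<and> f c v \<notin> {i, t}"
      have "c\<noteq>d \<and> f c v = f c v \<and> f c v' = t \<and> f d v = i \<and> f d v' = f c v \<and> f c v\<notin>{i,t}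
       \<and> c\<in>{1..n} \<and> d\<in>{1..n} \<and> (\<forall>z\<in>{1..n}. z\<notin>{c,d} \<longrightarrow> f z v' = f z v)"
        using H cd(2) cdin(1,2) outcd by (intro conjI) simp_all
      then show ?thesis by blast
    next
      assume H: "f d v' = t \<and> f c v = i \<and> f c v' = f d v \<and> f d v \<notin> {i, t}"
      have "d\<noteq>c \<and> f d v = f d v \<and> f d v' = t \<and> f c v = i \<and> f c v' = f d v \<and> f d v\<notin>{i,t}
       \<and> d\<in>{1..n} \<and> c\<in>{1..n} \<and> (\<forall>z\<in>{1..n}. z\<notin>{d,c} \<longrightarrow> f z v' = f z v)"
        using H cd(2) cdin(1,2) outcd by (intro conjI) auto
      then show ?thesis by blast
    qed
    then obtain c' d' j where C: "c'\<noteq>d'" "f c' v = j" "f c' v' = t" "f d' v = i" "f d' v' = j" "j\<notin>{i,t}"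
       "c'\<in>{1..n}" "d'\<in>{1..n}" "\<forall>z\<in>{1..n}. z\<notin>{c',d'} \<longrightarrow> f z v' = f z v" by blast
    have "j = s" if s: "s\<in>{1..k}" "s\<notin>{t,i}" "v s \<ge> 1" for s
    proof -
      obtain b where B: "b\<in>{1..n}" "b\<noteq>a" "f b v = s" "f b (move s t v) = i"
        "\<forall>z\<in>{1..n}. z\<notin>{a,b} \<longrightarrow> f z (move s t v) = f z v"
        "f a (move s t v) = t" "f a v = i" "card {z\<in>{1..n}. f z (move s t v) \<noteq> f z v'} \<le> 2"
        using side_s[OF s] by blast
      have ab: "a \<noteq> b" using B(2) by simp
      have sit: "s \<notin> {i,t}" using s(2) by simp
      show ?thesis
        by (rule key[of a b f v i "move s t v" t s n c' d' j v', OF ab B(7) B(6) B(3) B(4) B(5) C(1-5) C(9) C(6) sit it a B(1) C(7) C(8) B(8)])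
    qed
    from this[OF assms(9) assms(12) assms(14)] this[OF assms(10) assms(13) assms(15)] assms(11)
    show False by simp
  qed
  show ?thesis using cD le2 ne0 ne2 by linarith
qed

end
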